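(* Let $(G,\omega,\mu)$ be an infinite, connected, locally finite weighted graph, let $V:G\to\mathbb{R}$, and let $u:G\to\mathbb{R}$ be a solution of $\Delta u - Vu=0$ in $G$. Let $\eta,\xi:G\to\mathbb{R}$ satisfy: $\eta\ge0$ with finite support, and $$[\eta^2(y)-\eta^2(x)]\,[e^{\xi(y)}-e^{\xi(x)}]\ge0\quad\text{for all }x,y\in G\text{ with }x\sim y.$$ Then for any $p\ge2$, $$\frac12\sum_{x\in G}|u(x)|^p\eta^2(x)e^{\xi(x)}\Big\{V(x)\,p\,\mu(x)-\frac12\sum_{y\in G}\omega(x,y)\big[1-e^{\xi(y)-\xi(x)}\big]^2\Big\}\le\sum_{x,y\in G}|u(x)|^p e^{\xi(y)}[\eta(y)-\eta(x)]^2\omega(x,y).$$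
   Context: A weighted graph $(G,\omega,\mu)$: $G$ countable, $\mu:G\to(0,\infty)$, $\omega:G\times G\to[0,\infty)$ symmetric with $\omega(x,x)=0$ and $\sum_y\omega(x,y)<\infty$; $x\sim y$ iff $\omega(x,y)>0$; locally finite means each vertex has finitely many neighbours; connected means any two vertices are joined by a finite path. Laplacian $\Delta f(x)=\frac{1}{\mu(x)}\sum_{y}[f(y)-f(x)]\omega(x,y)$. *)

theory Defs
  imports "HOL-Analysis.Analysis"
begin

definition weighted_graph :: "('a::countable \<Rightarrow> 'a \<Rightarrow> real) \<Rightarrow> ('a \<Rightarrow> real) \<Rightarrow> bool" where
  "weighted_graph \<omega> \<mu> \<longleftrightarrow>
     (\<forall>x. \<mu> x > 0) \<and> (\<forall>x y. \<omega> x y \<ge> 0) \<and> (\<forall>x y. \<omega> x y = \<omega> y x) \<and>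
     (\<forall>x. \<omega> x x = 0) \<and> (\<forall>x. (\<lambda>y. \<omega> x y) summable_on UNIV)"

definition adjacent :: "('a \<Rightarrow> 'a \<Rightarrow> real) \<Rightarrow> 'a \<Rightarrow> 'a \<Rightarrow> bool" where
  "adjacent \<omega> x y \<longleftrightarrow> \<omega> x y > 0"

definition locally_finite_graph :: "('a \<Rightarrow> 'a \<Rightarrow> real) \<Rightarrow> bool" where
  "locally_finite_graph \<omega> \<longleftrightarrow> (\<forall>x. finite {y. adjacent \<omega> x y})"

definition connected_graph :: "('a \<Rightarrow> 'a \<Rightarrow> real) \<Rightarrow> bool" where
  "connected_graph \<omega> \<longleftrightarrow> (\<forall>x y. (adjacent \<omega>)\<^sup>*\<^sup>* x y)"

definition graph_laplacian :: "('a \<Rightarrow> 'a \<Rightarrow> real) \<Rightarrow> ('a \<Rightarrow> real) \<Rightarrow> ('a \<Rightarrow> real) \<Rightarrow> 'a \<Rightarrow> real" where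
  "graph_laplacian \<omega> \<mu> f x = (1 / \<mu> x) * (\<Sum>\<^sub>\<infinity>y. (f y - f x) * \<omega> x y)"

end

theory Submission imports Defs begin

lemma tangent_powr:
  fixes k c x :: real
  assumes k: "k \<ge> 1" and c: "c > 0" and x: "x \<ge> 0"
  shows "x powr k - c powr k \<ge> k * c powr (k - 1) * (x - c)"
proof (cases "x = 0")
  case True
  have "c powr k = c powr (k - 1) * c" using c by (simp add: powr_diff)
  moreover have "c powr (k-1) * c \<ge> 0" using c by simp
  ultimately show ?thesis using True k c
    by (simp add: algebra_simps)
next
  case False
  hence "x > 0" using x by simp
  have d: "((\<lambda>x. x powr k) has_real_derivative k * c powr (k - 1)) (at c within {0<..})"
    using c by (auto intro!: derivative_eq_intros)
  show ?thesis
    using convex_on_imp_above_tangent[OF powr_convex[OF k] _ _ _ d] c \<open>x>0\<close>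
    by (auto simp: interior_open)
qed

lemma Xh: fixes a p :: real assumes "p \<ge> 2"
  shows "\<bar>a\<bar> powr p = (\<bar>a\<bar> powr (p-2) * a) * a"
proof (cases "a = 0")
  case True thus ?thesis by simp
next
  case False
  have "\<bar>a\<bar> powr p = \<bar>a\<bar> powr ((p-2) + 2)" by simp
  also have "\<dots> = \<bar>a\<bar> powr (p-2) * \<bar>a\<bar> powr 2"
    by (rule powr_add)
  also have "\<bar>a\<bar> powr 2 = a * a" using False by (simp add: power2_eq_square)
  finally show ?thesis by simp
qed

lemma quadform:
  fixes M N K x y :: real
  assumes "M \<ge> 0" "N \<ge> 0" "K^2 \<le> 4* M* N"
  shows "0 \<le> M* y^2 + N* x^2 - K* x* y"
proof (cases "M = 0")
  case True
  hence "K = 0" using assms(3) by simp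
  thus ?thesis using True assms(2) by simp
next
  case False
  hence Mp: "M > 0" using assms(1) by simp
  have "4* M* (M* y^2 + N* x^2 - K* x* y) = (2* M* y - K* x)^2 + (4* M* N - K^2)* x^2"
    by (simp add: power2_eq_square algebra_simps)
  also have "\<dots> \<ge> 0" using assms(3) by (intro add_nonneg_nonneg) auto
  finally show ?thesis using Mp by (simp add: zero_le_mult_iff)
qed

lemma quad:
  fixes r z A B s t :: real
  assumes s: "s > 0" and t: "t > 0"
  shows "0 \<le> z\<^sup>2 * t * (B-A)\<^sup>2 + r\<^sup>2 * s * (B-A)\<^sup>2 + (B\<^sup>2* t* r - A\<^sup>2* s* z)* (r-z)
          + 1/4* (z\<^sup>2* A\<^sup>2* s* (1-t/s)\<^sup>2 + r\<^sup>2* B\<^sup>2* t* (1-s/t)\<^sup>2)"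
proof -
  define D where "D = B - A"
  have e1: "s* (1-t/s)\<^sup>2 = (s-t)\<^sup>2/s" using s by (simp add: field_simps power2_eq_square)
  have e2: "t* (1-s/t)\<^sup>2 = (s-t)\<^sup>2/t" using t by (simp add: field_simps power2_eq_square)
  define Qa where "Qa = A\<^sup>2* (s-t)\<^sup>2/(4* s) + D\<^sup>2* t"
  define Qb where "Qb = B\<^sup>2* (s-t)\<^sup>2/(4* t) + D\<^sup>2* s"
  define M where "M = A\<^sup>2* s + Qa"
  define N where "N = B\<^sup>2* t + Qb"
  define K where "K = A\<^sup>2* s + B\<^sup>2* t"
  have Qa: "Qa \<ge> 0" using s t unfolding Qa_def by simp
  have Qb: "Qb \<ge> 0" using s t unfolding Qb_def by simp
  have ex: "z\<^sup>2 * t * (B-A)\<^sup>2 + r\<^sup>2 * s * (B-A)\<^sup>2 + (B\<^sup>2* t* r - A\<^sup>2* s* z)* (r-z)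
          + 1/4* (z\<^sup>2* A\<^sup>2* s* (1-t/s)\<^sup>2 + r\<^sup>2* B\<^sup>2* t* (1-s/t)\<^sup>2) = M* z^2 + N* r^2 - K* r* z"
  proof -
    have "z\<^sup>2* A\<^sup>2* s* (1-t/s)\<^sup>2 = z\<^sup>2* A\<^sup>2* ((s-t)\<^sup>2/s)" using e1 by (simp add: mult.assoc)
    moreover have "r\<^sup>2* B\<^sup>2* t* (1-s/t)\<^sup>2 = r\<^sup>2* B\<^sup>2* ((s-t)\<^sup>2/t)" using e2 by (simp add: mult.assoc)
    ultimately show ?thesis unfolding M_def N_def K_def Qa_def Qb_def D_def
      using s t by (simp add: field_simps power2_eq_square)
  qed
  define P where "P = A\<^sup>2 * B\<^sup>2 * (s-t)\<^sup>2"
  define Z where "Z = D\<^sup>2 * (A\<^sup>2 * s\<^sup>2 + B\<^sup>2 * t\<^sup>2)"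
  define Y where "Y = D\<^sup>2 * (A * s + B * t)\<^sup>2"
  have a1: "4 * M * N - K^2 = (4 * A\<^sup>2 * s * Qb + 4 * B\<^sup>2 * t * Qa) + 4 * Qa * Qb - (A\<^sup>2 * s - B\<^sup>2 * t)^2"
    unfolding M_def N_def K_def by (simp add: algebra_simps power2_eq_square)
  have a2: "4 * A\<^sup>2 * s * Qb + 4 * B\<^sup>2 * t * Qa = P * (s/t + t/s) + 4 * Z"
    unfolding Qa_def Qb_def P_def Z_def using s t by (simp add: field_simps power2_eq_square)
  have st: "s/t + t/s \<ge> 2"
  proof -
    have "s/t + t/s - 2 = (s-t)\<^sup>2/(s * t)" using s t by (simp add: field_simps power2_eq_square)
    also have "\<dots> \<ge> 0" using s t by simp
    finally show ?thesis by simp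
  qed
  have a5: "2 * P \<le> P * (s/t + t/s)"
  proof -
    have "P \<ge> 0" unfolding P_def by simp
    thus ?thesis using mult_left_mono[OF st, of P] by (simp add: mult.commute)
  qed
  have r3: "A\<^sup>2 * s - B\<^sup>2 * t = A * B * (s-t) - D * (A * s+B * t)" unfolding D_def by (simp add: algebra_simps power2_eq_square)
  have r4: "(A * B * (s-t) - D * (A * s+B * t))^2 \<le> 2 * (A * B * (s-t))^2 + 2 * (D * (A * s+B * t))^2"
  proof -
    have "0 \<le> (A * B * (s-t) + D * (A * s+B * t))^2" by simp
    thus ?thesis by (simp add: power2_eq_square algebra_simps)
  qed
  have a3: "(A\<^sup>2 * s - B\<^sup>2 * t)^2 \<le> 2 * P + 2 * Y"
    using r3 r4 unfolding P_def Y_def by (simp add: power_mult_distrib)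
  have r5: "(A * s+B * t)^2 \<le> 2 * (A\<^sup>2 * s\<^sup>2+B\<^sup>2 * t\<^sup>2)"
  proof -
    have "0 \<le> (A * s-B * t)^2" by simp
    thus ?thesis by (simp add: power2_eq_square algebra_simps)
  qed
  have a4: "Y \<le> 2 * Z"
    using mult_left_mono[OF r5, of "D\<^sup>2"] unfolding Y_def Z_def by (simp add: algebra_simps)
  have QQ: "4 * Qa * Qb \<ge> 0" using Qa Qb by simp
  have "K^2 \<le> 4 * M * N"
    using a1 a2 a3 a4 a5 QQ by linarith
  moreover have "M \<ge> 0" "N \<ge> 0" using Qa Qb s t unfolding M_def N_def by auto
  ultimately show ?thesis unfolding ex by (intro quadform)
qed

lemma powr_sq: fixes x k :: real assumes "x \<ge> 0" shows "(x powr k)\<^sup>2 = x powr (2 * k)"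
proof -
  have "(x powr k)\<^sup>2 = x powr k * x powr k" by (simp add: power2_eq_square)
  also have "\<dots> = x powr (k + k)" by (rule powr_add[symmetric])
  finally show ?thesis by simp
qed

lemma half_bound1:
  fixes \<alpha> \<beta> p :: real
  assumes p: "p \<ge> 2" and al: "\<alpha> \<ge> 0" and be: "\<beta> > 0"
  shows "p/2 * (\<beta> powr (p-2) * (\<beta> * \<beta> - \<alpha> * \<beta>)) \<ge> \<beta> powr (p/2) * (\<beta> powr (p/2) - \<alpha> powr (p/2))"
proof -
  define k where "k = p/2"
  have k: "k \<ge> 1" using p unfolding k_def by simp
  have tg: "\<alpha> powr k - \<beta> powr k \<ge> k * \<beta> powr (k - 1) * (\<alpha> - \<beta>)"
    by (rule tangent_powr[OF k be al])
  hence "k * \<beta> powr (k - 1) * (\<beta> - \<alpha>) \<ge> \<beta> powr k - \<alpha> powr k" by (simp add: algebra_simps)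
  hence "\<beta> powr k * (k * \<beta> powr (k - 1) * (\<beta> - \<alpha>)) \<ge> \<beta> powr k * (\<beta> powr k - \<alpha> powr k)"
    by (intro mult_left_mono) auto
  moreover have "\<beta> powr k * \<beta> powr (k - 1) = \<beta> powr (p-2) * \<beta>"
  proof -
    have "\<beta> powr k * \<beta> powr (k - 1) = \<beta> powr (k + (k-1))" by (rule powr_add[symmetric])
    also have "k + (k-1) = (p-2) + 1" unfolding k_def by simp
    also have "\<beta> powr ((p-2) + 1) = \<beta> powr (p-2) * \<beta> powr 1" by (rule powr_add)
    also have "\<dots> = \<beta> powr (p-2) * \<beta>" using be by simp
    finally show ?thesis .
  qed
  ultimately show ?thesis unfolding k_def[symmetric]
    by (simp add: algebra_simps)
qed

lemma half_bound2:
  fixes \<alpha> \<beta> p :: real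
  assumes p: "p \<ge> 2" and al: "\<alpha> > 0" and be: "\<beta> \<ge> 0"
  shows "p/2 * (\<alpha> powr (p-2) * (\<alpha> * \<beta> - \<alpha> * \<alpha>)) \<le> \<alpha> powr (p/2) * (\<beta> powr (p/2) - \<alpha> powr (p/2))"
proof -
  define k where "k = p/2"
  have k: "k \<ge> 1" using p unfolding k_def by simp
  have tg: "\<beta> powr k - \<alpha> powr k \<ge> k * \<alpha> powr (k - 1) * (\<beta> - \<alpha>)"
    by (rule tangent_powr[OF k al be])
  hence "\<alpha> powr k * (k * \<alpha> powr (k - 1) * (\<beta> - \<alpha>)) \<le> \<alpha> powr k * (\<beta> powr k - \<alpha> powr k)"
    by (intro mult_left_mono) auto
  moreover have "\<alpha> powr k * \<alpha> powr (k - 1) = \<alpha> powr (p-2) * \<alpha>"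
  proof -
    have "\<alpha> powr k * \<alpha> powr (k - 1) = \<alpha> powr (k + (k-1))" by (rule powr_add[symmetric])
    also have "k + (k-1) = (p-2) + 1" unfolding k_def by simp
    also have "\<alpha> powr ((p-2) + 1) = \<alpha> powr (p-2) * \<alpha> powr 1" by (rule powr_add)
    also have "\<dots> = \<alpha> powr (p-2) * \<alpha>" using al by simp
    finally show ?thesis .
  qed
  ultimately show ?thesis unfolding k_def[symmetric]
    by (simp add: algebra_simps)
qed

lemma edge:
  fixes a b A B s t p :: real
  assumes p: "p \<ge> 2" and s: "s > 0" and t: "t > 0"
  shows "0 \<le> \<bar>a\<bar> powr p * t * (B-A)\<^sup>2 + \<bar>b\<bar> powr p * s * (B-A)\<^sup>2
     + p/2 * ((B\<^sup>2 * t * (\<bar>b\<bar> powr (p-2) * b) - A\<^sup>2 * s * (\<bar>a\<bar> powr (p-2) * a)) * (b - a))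
     + 1/4 * (\<bar>a\<bar> powr p * A\<^sup>2 * s * (1 - t/s)\<^sup>2 + \<bar>b\<bar> powr p * B\<^sup>2 * t * (1 - s/t)\<^sup>2)"
proof (cases "a * b \<le> 0")
  case True
  have h1: "(\<bar>b\<bar> powr (p-2) * b) * (b - a) \<ge> 0"
  proof -
    have "(\<bar>b\<bar> powr (p-2) * b) * (b - a) = \<bar>b\<bar> powr (p-2) * (b * b - a * b)" by (simp add: algebra_simps)
    also have "\<dots> \<ge> 0" using True by (intro mult_nonneg_nonneg) (simp, use zero_le_square[of b] in linarith)
    finally show ?thesis .
  qed
  have h2: "(\<bar>a\<bar> powr (p-2) * a) * (b - a) \<le> 0"
  proof -
    have "(\<bar>a\<bar> powr (p-2) * a) * (b - a) = - (\<bar>a\<bar> powr (p-2) * (a * a - a * b))" by (simp add: algebra_simps)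
    also have "\<dots> \<le> 0" using True proof -
      have "0 \<le> \<bar>a\<bar> powr (p - 2) * (a * a - a * b)"
        by (intro mult_nonneg_nonneg) (simp, use zero_le_square[of a] True in linarith)
      thus ?thesis by simp
    qed
    finally show ?thesis .
  qed
  have "(B\<^sup>2 * t * (\<bar>b\<bar> powr (p-2) * b) - A\<^sup>2 * s * (\<bar>a\<bar> powr (p-2) * a)) * (b - a)
        = B\<^sup>2 * t * ((\<bar>b\<bar> powr (p-2) * b) * (b - a)) - A\<^sup>2 * s * ((\<bar>a\<bar> powr (p-2) * a) * (b - a))"
    by (simp add: algebra_simps)
  also have "\<dots> \<ge> 0"
  proof -
    have "B\<^sup>2 * t * ((\<bar>b\<bar> powr (p-2) * b) * (b - a)) \<ge> 0" using h1 t by simp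
    moreover have "A\<^sup>2 * s * ((\<bar>a\<bar> powr (p-2) * a) * (b - a)) \<le> 0" using h2 s
      by (simp add: mult_nonneg_nonpos)
    ultimately show ?thesis by simp
  qed
  finally have T: "0 \<le> p/2 * ((B\<^sup>2 * t * (\<bar>b\<bar> powr (p-2) * b) - A\<^sup>2 * s * (\<bar>a\<bar> powr (p-2) * a)) * (b - a))"
    using p by simp
  have "0 \<le> \<bar>a\<bar> powr p * t * (B-A)\<^sup>2" "0 \<le> \<bar>b\<bar> powr p * s * (B-A)\<^sup>2"
     "0 \<le> 1/4 * (\<bar>a\<bar> powr p * A\<^sup>2 * s * (1 - t/s)\<^sup>2 + \<bar>b\<bar> powr p * B\<^sup>2 * t * (1 - s/t)\<^sup>2)"
    using s t by auto
  thus ?thesis using T by linarith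
next
  case False
  define \<alpha> where "\<alpha> = \<bar>a\<bar>"
  define \<beta> where "\<beta> = \<bar>b\<bar>"
  have al: "\<alpha> > 0" and be: "\<beta> > 0" using False unfolding \<alpha>_def \<beta>_def by auto
  have ab: "a * b = \<alpha> * \<beta>" using False unfolding \<alpha>_def \<beta>_def
    by (metis abs_mult abs_of_pos not_le)
  have aa: "a * a = \<alpha> * \<alpha>" "b * b = \<beta> * \<beta>" unfolding \<alpha>_def \<beta>_def by auto
  define v where "v = \<beta> powr (p/2)"
  define w where "w = \<alpha> powr (p/2)"
  have hb: "(\<bar>b\<bar> powr (p-2) * b) * (b - a) = \<beta> powr (p-2) * (\<beta> * \<beta> - \<alpha> * \<beta>)"
    using ab aa unfolding \<beta>_def by (simp add: algebra_simps)
  have ha: "(\<bar>a\<bar> powr (p-2) * a) * (b - a) = \<alpha> powr (p-2) * (\<alpha> * \<beta> - \<alpha> * \<alpha>)"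
    using ab aa unfolding \<alpha>_def by (simp add: algebra_simps)
  have b1: "p/2 * (\<beta> powr (p-2) * (\<beta> * \<beta> - \<alpha> * \<beta>)) \<ge> v * (v - w)"
    unfolding v_def w_def by (rule half_bound1[OF p _ be]) (use al in simp)
  have b2: "p/2 * (\<alpha> powr (p-2) * (\<alpha> * \<beta> - \<alpha> * \<alpha>)) \<le> w * (v - w)"
    unfolding v_def w_def by (rule half_bound2[OF p al]) (use be in simp)
  have Xa: "\<bar>a\<bar> powr p = w\<^sup>2" unfolding w_def \<alpha>_def by (simp add: powr_sq)
  have Xb: "\<bar>b\<bar> powr p = v\<^sup>2" unfolding v_def \<beta>_def by (simp add: powr_sq)
  have "p/2 * ((B\<^sup>2 * t * (\<bar>b\<bar> powr (p-2) * b) - A\<^sup>2 * s * (\<bar>a\<bar> powr (p-2) * a)) * (b - a))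
     = B\<^sup>2 * t * (p/2 * ((\<bar>b\<bar> powr (p-2) * b) * (b - a))) - A\<^sup>2 * s * (p/2 * ((\<bar>a\<bar> powr (p-2) * a) * (b - a)))"
    by (simp add: algebra_simps)
  also have "\<dots> = B\<^sup>2 * t * (p/2 * (\<beta> powr (p-2) * (\<beta> * \<beta> - \<alpha> * \<beta>))) - A\<^sup>2 * s * (p/2 * (\<alpha> powr (p-2) * (\<alpha> * \<beta> - \<alpha> * \<alpha>)))"
    unfolding hb ha ..
  also have "\<dots> \<ge> B\<^sup>2 * t * (v * (v - w)) - A\<^sup>2 * s * (w * (v - w))"
  proof -
    have "B\<^sup>2 * t * (v * (v - w)) \<le> B\<^sup>2 * t * (p/2 * (\<beta> powr (p-2) * (\<beta> * \<beta> - \<alpha> * \<beta>)))"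
      using b1 t by (intro mult_left_mono) auto
    moreover have "A\<^sup>2 * s * (p/2 * (\<alpha> powr (p-2) * (\<alpha> * \<beta> - \<alpha> * \<alpha>))) \<le> A\<^sup>2 * s * (w * (v - w))"
      using b2 s by (intro mult_left_mono) auto
    ultimately show ?thesis by linarith
  qed
  finally have T: "p/2 * ((B\<^sup>2 * t * (\<bar>b\<bar> powr (p-2) * b) - A\<^sup>2 * s * (\<bar>a\<bar> powr (p-2) * a)) * (b - a))
     \<ge> (B\<^sup>2 * t * v - A\<^sup>2 * s * w) * (v - w)" by (simp add: algebra_simps)
  have Q: "0 \<le> w\<^sup>2 * t * (B-A)\<^sup>2 + v\<^sup>2 * s * (B-A)\<^sup>2 + (B\<^sup>2 * t * v - A\<^sup>2 * s * w) * (v-w)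
          + 1/4 * (w\<^sup>2 * A\<^sup>2 * s * (1-t/s)\<^sup>2 + v\<^sup>2 * B\<^sup>2 * t * (1-s/t)\<^sup>2)"
    by (rule quad[OF s t])
  show ?thesis unfolding Xa Xb using T Q by linarith
qed

lemma infsum_fin:
  assumes "finite W" "\<And>x. x \<notin> W \<Longrightarrow> f x = 0"
  shows "infsum f UNIV = sum f W"
proof -
  have "infsum f UNIV = infsum f W"
    by (rule infsum_cong_neutral) (use assms in auto)
  thus ?thesis using assms(1) by simp
qed

theorem proposition4p3:
  fixes \<omega> :: "'a::countable \<Rightarrow> 'a \<Rightarrow> real" and \<mu> :: "'a \<Rightarrow> real"
    and V u \<eta> \<xi> :: "'a \<Rightarrow> real" and p :: real
  assumes wg: "weighted_graph \<omega> \<mu>"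
    and inf: "infinite (UNIV :: 'a set)"
    and conn: "connected_graph \<omega>"
    and lf: "locally_finite_graph \<omega>"
    and sol: "\<forall>x. graph_laplacian \<omega> \<mu> u x - V x * u x = 0"
    and eta_nonneg: "\<forall>x. \<eta> x \<ge> 0"
    and eta_fin: "finite {x. \<eta> x \<noteq> 0}"
    and mono: "\<forall>x y. adjacent \<omega> x y \<longrightarrow>
                 ((\<eta> y)\<^sup>2 - (\<eta> x)\<^sup>2) * (exp (\<xi> y) - exp (\<xi> x)) \<ge> 0"
    and p: "p \<ge> 2"
  shows "1/2 * (\<Sum>\<^sub>\<infinity>x. \<bar>u x\<bar> powr p * (\<eta> x)\<^sup>2 * exp (\<xi> x) *
            (V x * p * \<mu> x - 1/2 * (\<Sum>\<^sub>\<infinity>y. \<omega> x y * (1 - exp (\<xi> y - \<xi> x))\<^sup>2)))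
         \<le> (\<Sum>\<^sub>\<infinity>(x, y). \<bar>u x\<bar> powr p * exp (\<xi> y) * (\<eta> y - \<eta> x)\<^sup>2 * \<omega> x y)"
proof -
  have mupos: "\<And>x. \<mu> x > 0" and wnn: "\<And>x y. \<omega> x y \<ge> 0" and wsym: "\<And>x y. \<omega> x y = \<omega> y x"
    using wg unfolding weighted_graph_def by auto
  define S where "S = {x. \<eta> x \<noteq> 0}"
  define W where "W = S \<union> (\<Union>x\<in>S. {y. adjacent \<omega> x y})"
  have finW: "finite W" unfolding W_def S_def using eta_fin lf
    by (auto simp: locally_finite_graph_def)
  have adj: "\<And>x y. \<omega> x y \<noteq> 0 \<Longrightarrow> adjacent \<omega> x y"
    using wnn unfolding adjacent_def by (metis less_eq_real_def)
  have F1: "\<And>x y. x \<in> S \<Longrightarrow> y \<notin> W \<Longrightarrow> \<omega> x y = 0"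
    using adj unfolding W_def by blast
  have F2: "\<And>x y. \<not> (x \<in> W \<and> y \<in> W) \<Longrightarrow> \<omega> x y \<noteq> 0 \<Longrightarrow> \<eta> x = 0 \<and> \<eta> y = 0"
  proof -
    fix x y assume nw: "\<not> (x \<in> W \<and> y \<in> W)" and w: "\<omega> x y \<noteq> 0"
    have "adjacent \<omega> x y" "adjacent \<omega> y x" using adj w wsym by metis+
    thus "\<eta> x = 0 \<and> \<eta> y = 0" using nw unfolding W_def S_def by blast
  qed
  have SW: "S \<subseteq> W" unfolding W_def by auto
  define X where "X x = \<bar>u x\<bar> powr p" for x
  define h where "h x = \<bar>u x\<bar> powr (p-2) * u x" for x
  define \<psi> where "\<psi> x = (\<eta> x)\<^sup>2 * exp (\<xi> x)" for x
  define G where "G x y = \<psi> x * h x * (u y - u x) * \<omega> x y" for x y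
  define C where "C x y = X x * \<psi> x * (\<omega> x y * (1 - exp (\<xi> y - \<xi> x))\<^sup>2)" for x y
  define R where "R x y = X x * exp (\<xi> y) * (\<eta> y - \<eta> x)\<^sup>2 * \<omega> x y" for x y
  define E where "E x y = R x y - p/2 * G x y + 1/4 * C x y" for x y
  have lap: "\<And>x. x \<in> S \<Longrightarrow> (\<Sum>y\<in>W. (u y - u x) * \<omega> x y) = V x * \<mu> x * u x"
  proof -
    fix x assume xS: "x \<in> S"
    have "(\<Sum>\<^sub>\<infinity>y. (u y - u x) * \<omega> x y) = (\<Sum>y\<in>W. (u y - u x) * \<omega> x y)"
      by (rule infsum_fin[OF finW]) (simp add: F1[OF xS])
    moreover have "1 / \<mu> x * (\<Sum>\<^sub>\<infinity>y. (u y - u x) * \<omega> x y) = V x * u x"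
      using sol unfolding graph_laplacian_def by auto
    ultimately show "(\<Sum>y\<in>W. (u y - u x) * \<omega> x y) = V x * \<mu> x * u x"
      using mupos[of x] by (simp add: field_simps)
  qed
  have LHS: "(\<Sum>\<^sub>\<infinity>x. \<bar>u x\<bar> powr p * (\<eta> x)\<^sup>2 * exp (\<xi> x) *
            (V x * p * \<mu> x - 1/2 * (\<Sum>\<^sub>\<infinity>y. \<omega> x y * (1 - exp (\<xi> y - \<xi> x))\<^sup>2)))
       = (\<Sum>x\<in>W. p * (\<Sum>y\<in>W. G x y) - 1/2 * (\<Sum>y\<in>W. C x y))"
  proof -
    have "(\<Sum>\<^sub>\<infinity>x. \<bar>u x\<bar> powr p * (\<eta> x)\<^sup>2 * exp (\<xi> x) *
            (V x * p * \<mu> x - 1/2 * (\<Sum>\<^sub>\<infinity>y. \<omega> x y * (1 - exp (\<xi> y - \<xi> x))\<^sup>2)))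
       = (\<Sum>x\<in>W. \<bar>u x\<bar> powr p * (\<eta> x)\<^sup>2 * exp (\<xi> x) *
            (V x * p * \<mu> x - 1/2 * (\<Sum>\<^sub>\<infinity>y. \<omega> x y * (1 - exp (\<xi> y - \<xi> x))\<^sup>2)))"
      by (rule infsum_fin[OF finW]) (use SW in \<open>auto simp: S_def\<close>)
    also have "\<dots> = (\<Sum>x\<in>W. p * (\<Sum>y\<in>W. G x y) - 1/2 * (\<Sum>y\<in>W. C x y))"
    proof (rule sum.cong[OF refl])
      fix x assume "x \<in> W"
      show "\<bar>u x\<bar> powr p * (\<eta> x)\<^sup>2 * exp (\<xi> x) *
            (V x * p * \<mu> x - 1/2 * (\<Sum>\<^sub>\<infinity>y. \<omega> x y * (1 - exp (\<xi> y - \<xi> x))\<^sup>2))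
            = p * (\<Sum>y\<in>W. G x y) - 1/2 * (\<Sum>y\<in>W. C x y)"
      proof (cases "x \<in> S")
        case False
        hence "\<eta> x = 0" unfolding S_def by simp
        thus ?thesis unfolding G_def C_def \<psi>_def by simp
      next
        case True
        have i: "(\<Sum>\<^sub>\<infinity>y. \<omega> x y * (1 - exp (\<xi> y - \<xi> x))\<^sup>2) = (\<Sum>y\<in>W. \<omega> x y * (1 - exp (\<xi> y - \<xi> x))\<^sup>2)"
          by (rule infsum_fin[OF finW]) (simp add: F1[OF True])
        have g: "(\<Sum>y\<in>W. G x y) = \<psi> x * h x * (V x * \<mu> x * u x)"
          unfolding G_def lap[OF True, symmetric] by (simp add: sum_distrib_left mult.assoc)
        have c: "(\<Sum>y\<in>W. C x y) = X x * \<psi> x * (\<Sum>y\<in>W. \<omega> x y * (1 - exp (\<xi> y - \<xi> x))\<^sup>2)"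
          unfolding C_def by (simp add: sum_distrib_left)
        have xh: "X x = h x * u x" unfolding X_def h_def by (rule Xh[OF p])
        show ?thesis unfolding i g c using xh unfolding X_def[symmetric] \<psi>_def
          by (simp add: algebra_simps)
      qed
    qed
    finally show ?thesis .
  qed
  have RHS: "(\<Sum>\<^sub>\<infinity>(x, y). \<bar>u x\<bar> powr p * exp (\<xi> y) * (\<eta> y - \<eta> x)\<^sup>2 * \<omega> x y)
       = (\<Sum>x\<in>W. \<Sum>y\<in>W. R x y)"
  proof -
    have "(\<Sum>\<^sub>\<infinity>(x, y). \<bar>u x\<bar> powr p * exp (\<xi> y) * (\<eta> y - \<eta> x)\<^sup>2 * \<omega> x y)
        = (\<Sum>(x, y)\<in>W \<times> W. \<bar>u x\<bar> powr p * exp (\<xi> y) * (\<eta> y - \<eta> x)\<^sup>2 * \<omega> x y)"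
    proof (rule infsum_fin)
      show "finite (W \<times> W)" using finW by simp
      fix z :: "'a \<times> 'a" assume z: "z \<notin> W \<times> W"
      obtain x y where zxy: "z = (x, y)" by fastforce
      show "(case z of (x, y) \<Rightarrow> \<bar>u x\<bar> powr p * exp (\<xi> y) * (\<eta> y - \<eta> x)\<^sup>2 * \<omega> x y) = 0"
        using F2[of x y] z unfolding zxy by auto
    qed
    also have "\<dots> = (\<Sum>x\<in>W. \<Sum>y\<in>W. R x y)"
      unfolding R_def X_def by (rule sum.cartesian_product[symmetric])
    finally show ?thesis .
  qed
  have edgeE: "\<And>x y. E x y + E y x \<ge> 0"
  proof -
    fix x y
    define a b A B s t where "a = u x" "b = u y" "A = \<eta> x" "B = \<eta> y" "s = exp (\<xi> x)" "t = exp (\<xi> y)"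
    have s: "s > 0" and t: "t > 0" unfolding a_b_A_B_s_t_def by auto
    have e1: "exp (\<xi> y - \<xi> x) = t / s" "exp (\<xi> x - \<xi> y) = s / t"
      unfolding a_b_A_B_s_t_def by (simp_all add: exp_diff)
    have "E x y + E y x = \<omega> x y * (\<bar>a\<bar> powr p * t * (B-A)\<^sup>2 + \<bar>b\<bar> powr p * s * (B-A)\<^sup>2
     + p/2 * ((B\<^sup>2 * t * (\<bar>b\<bar> powr (p-2) * b) - A\<^sup>2 * s * (\<bar>a\<bar> powr (p-2) * a)) * (b - a))
     + 1/4 * (\<bar>a\<bar> powr p * A\<^sup>2 * s * (1 - t/s)\<^sup>2 + \<bar>b\<bar> powr p * B\<^sup>2 * t * (1 - s/t)\<^sup>2))"
      unfolding E_def R_def G_def C_def X_def h_def \<psi>_def e1 wsym[of y x]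
      unfolding a_b_A_B_s_t_def[symmetric]
      by (simp add: algebra_simps power2_commute[of A B])
    also have "\<dots> \<ge> 0" using wnn edge[OF p s t] by simp
    finally show "E x y + E y x \<ge> 0" .
  qed
  have swap: "(\<Sum>x\<in>W. \<Sum>y\<in>W. E x y) = (\<Sum>x\<in>W. \<Sum>y\<in>W. E y x)"
    by (rule sum.swap)
  have "2 * (\<Sum>x\<in>W. \<Sum>y\<in>W. E x y) = (\<Sum>x\<in>W. \<Sum>y\<in>W. E x y + E y x)"
    using swap by (simp add: sum.distrib)
  also have "\<dots> \<ge> 0" by (intro sum_nonneg edgeE)
  finally have Enn: "(\<Sum>x\<in>W. \<Sum>y\<in>W. E x y) \<ge> 0" by simp
  have Esplit: "(\<Sum>x\<in>W. \<Sum>y\<in>W. E x y) = (\<Sum>x\<in>W. \<Sum>y\<in>W. R x y) - p/2 * (\<Sum>x\<in>W. \<Sum>y\<in>W. G x y)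
       + 1/4 * (\<Sum>x\<in>W. \<Sum>y\<in>W. C x y)"
    unfolding E_def by (simp add: sum.distrib sum_subtractf sum_distrib_left)
  have Lsplit: "(\<Sum>x\<in>W. p * (\<Sum>y\<in>W. G x y) - 1/2 * (\<Sum>y\<in>W. C x y))
      = p * (\<Sum>x\<in>W. \<Sum>y\<in>W. G x y) - 1/2 * (\<Sum>x\<in>W. \<Sum>y\<in>W. C x y)"
    by (simp add: sum_subtractf sum_distrib_left)
  have "1/2 * (p * (\<Sum>x\<in>W. \<Sum>y\<in>W. G x y) - 1/2 * (\<Sum>x\<in>W. \<Sum>y\<in>W. C x y))
     = p/2 * (\<Sum>x\<in>W. \<Sum>y\<in>W. G x y) - 1/4 * (\<Sum>x\<in>W. \<Sum>y\<in>W. C x y)"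
    by (simp add: algebra_simps)
  then show ?thesis unfolding LHS RHS Lsplit using Enn Esplit by linarith
qed

end
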